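(* Consider any $\bar x\in\mathcal{S}^*$ and $q>0$. If the mapping $\partial F$ is $q$-subregular at $\bar x$ for $0$, then the residual mapping $R$ is $\min\{q,1\}$-subregular at $\bar x$ for $0$. Conversely, if $R$ is $q$-subregular at $\bar x$ for $0$, then so is $\partial F$ at $\bar x$ for $0$.
   Context: Let $A\in\mathbb{R}^{m\times n}$, $b\in\mathbb{R}^m$, and let $\psi:\mathbb{R}^m\to(-\infty,\infty]$ and $g:\mathbb{R}^n\to(-\infty,\infty]$ be proper lower semicontinuous functions. Set $f(x):=\psi(Ax-b)$ and $F:=f+g$. Assume: (i) there is an open set $\mathcal{O}\supseteq\mathrm{dom}\,g$ such that $\psi$ is twice continuously differentiable on $A(\mathcal{O})-b$; (ii) $g$ is convex and continuous relative to $\mathrm{dom}\,g$; (iii) $\inf F>-\infty$ and $F$ is level bounded. $\partial F$ is the limiting subdifferential; for $x\in\mathrm{dom}\,g$, $\partial F(x)=\nabla f(x)+\partial g(x)$ and $\partial F(x)=\emptyset$ otherwise. $\mathcal{P}g(x):=\arg\min_z\{\frac12\|z-x\|^2+g(z)\}$, $R(x):=x-\mathcal{P}g(x-\nabla f(x))$, and $\mathcal{S}^*:=\{x\in\mathrm{dom}\,g:0\in\partial F(x)\}$; note $(\partial F)^{-1}(0)=R^{-1}(0)=\mathcal{S}^*$. A multifunction $\mathcal{F}:\mathbb{R}^n\rightrightarrows\mathbb{R}^n$ is $q$-subregular at $\bar x$ for $\bar y\in\mathcal{F}(\bar x)$ if there exist $\kappa>0,\delta>0$ with $\mathrm{dist}(x,\mathcal{F}^{-1}(\bar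 y))\le\kappa[\mathrm{dist}(\bar y,\mathcal{F}(x))]^q$ for all $x\in\mathbb{B}(\bar x,\delta)$ (with $\mathrm{dist}(\bar y,\emptyset)=\infty$). *)

theory Defs
  imports "HOL-Analysis.Analysis"
begin

definition edom :: "('a \<Rightarrow> ereal) \<Rightarrow> 'a set" where
  "edom h = {x. h x < \<infinity>}"

definition proper_fun :: "('a \<Rightarrow> ereal) \<Rightarrow> bool" where
  "proper_fun h \<longleftrightarrow> (\<forall>x. h x \<noteq> -\<infinity>) \<and> (\<exists>x. h x < \<infinity>)"

definition lsc_fun :: "('a::topological_space \<Rightarrow> ereal) \<Rightarrow> bool" where
  "lsc_fun h \<longleftrightarrow> (\<forall>c. closed {x. h x \<le> c})"

definition convex_efun :: "('a::real_vector \<Rightarrow> ereal) \<Rightarrow> bool" where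
  "convex_efun h \<longleftrightarrow> (\<forall>x y. \<forall>t::real. 0 < t \<and> t < 1 \<longrightarrow>
      h (t *\<^sub>R x + (1 - t) *\<^sub>R y) \<le> ereal t * h x + ereal (1 - t) * h y)"

definition C2_on :: "('a::euclidean_space \<Rightarrow> ereal) \<Rightarrow> 'a set \<Rightarrow> bool" where
  "C2_on h U \<longleftrightarrow> (\<forall>y\<in>U. \<bar>h y\<bar> \<noteq> \<infinity>) \<and>
     (\<exists>D :: 'a \<Rightarrow> ('a \<Rightarrow>\<^sub>L real). \<exists>D2 :: 'a \<Rightarrow> ('a \<Rightarrow>\<^sub>L ('a \<Rightarrow>\<^sub>L real)).
        (\<forall>y\<in>U. ((\<lambda>z. real_of_ereal (h z)) has_derivative blinfun_apply (D y)) (at y)) \<and>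
        (\<forall>y\<in>U. (D has_derivative blinfun_apply (D2 y)) (at y)) \<and>
        continuous_on U D2)"

definition regular_subdiff :: "('a::real_inner \<Rightarrow> ereal) \<Rightarrow> 'a \<Rightarrow> 'a set" where
  "regular_subdiff h x = {v. \<bar>h x\<bar> \<noteq> \<infinity> \<and>
     (\<forall>\<epsilon>>0. \<exists>\<delta>>0. \<forall>z\<in>ball x \<delta>.
        h z \<ge> h x + ereal (v \<bullet> (z - x) - \<epsilon> * norm (z - x)))}"

definition limiting_subdiff :: "('a::real_inner \<Rightarrow> ereal) \<Rightarrow> 'a \<Rightarrow> 'a set" where
  "limiting_subdiff h x = {v. \<exists>xs vs. xs \<longlonglongrightarrow> x \<and> (\<lambda>k. h (xs k)) \<longlonglongrightarrow> h x \<and>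
       vs \<longlonglongrightarrow> v \<and> (\<forall>k. vs k \<in> regular_subdiff h (xs k))}"

definition prox :: "('a::real_normed_vector \<Rightarrow> ereal) \<Rightarrow> 'a \<Rightarrow> 'a" where
  "prox g x = (THE z. \<forall>w. ereal (1/2 * (norm (z - x))\<^sup>2) + g z \<le> ereal (1/2 * (norm (w - x))\<^sup>2) + g w)"

(* q-subregularity of a multifunction; dist(y, {}) = \<infinity> *)
definition q_subregular :: "('a::metric_space \<Rightarrow> 'b::metric_space set) \<Rightarrow> 'a \<Rightarrow> 'b \<Rightarrow> real \<Rightarrow> bool" where
  "q_subregular M xb yb q \<longleftrightarrow> yb \<in> M xb \<and>
     (\<exists>\<kappa>>0. \<exists>\<delta>>0. \<forall>x\<in>cball xb \<delta>. M x \<noteq> {} \<longrightarrow>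
        infdist x {z. yb \<in> M z} \<le> \<kappa> * (infdist yb (M x)) powr q)"

end

theory Submission
  imports Defs
begin

definition csub :: "('a::real_inner \<Rightarrow> ereal) \<Rightarrow> 'a \<Rightarrow> 'a \<Rightarrow> bool" where
  "csub g x v \<longleftrightarrow> g x < \<infinity> \<and> (\<forall>w. g x + ereal (v \<bullet> (w - x)) \<le> g w)"

lemma lsc_seq_le:
  fixes g :: "'a::topological_space \<Rightarrow> ereal"
  assumes "lsc_fun g" "xs \<longlonglongrightarrow> l" "eventually (\<lambda>n. g (xs n) \<le> ereal (d n)) sequentially"
    "d \<longlonglongrightarrow> D"
  shows "g l \<le> ereal D"
proof (rule ereal_le_epsilon2)
  fix e :: real assume e: "0 < e"
  have "eventually (\<lambda>n. d n < D + e) sequentially"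
    using assms(4) e by (simp add: order_tendstoD(2))
  with assms(3) have ev: "eventually (\<lambda>n. xs n \<in> {z. g z \<le> ereal (D + e)}) sequentially"
    by eventually_elim (use order_trans in force)
  have "closed {z. g z \<le> ereal (D + e)}" using assms(1) unfolding lsc_fun_def by blast
  from Lim_in_closed_set[OF this ev _ assms(2)] show "g l \<le> ereal D + ereal e" by simp
qed

lemma lsc_add_cont:
  fixes g :: "'a::metric_space \<Rightarrow> ereal"
  assumes "continuous_on UNIV h" "lsc_fun g" "\<forall>x. g x \<noteq> -\<infinity>"
  shows "lsc_fun (\<lambda>x. ereal (h x) + g x)"
  unfolding lsc_fun_def
proof
  fix c :: ereal
  show "closed {x. ereal (h x) + g x \<le> c}"
  proof (cases c)
    case PInf then show ?thesis by simp
  next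
    case MInf
    have "{x. ereal (h x) + g x \<le> c} = {}" using assms(3) MInf
      by auto
    then show ?thesis by simp
  next
    case (real c')
    show ?thesis unfolding closed_sequential_limits
    proof (intro allI impI, elim conjE)
      fix xs l assume xs: "\<forall>n. xs n \<in> {x. ereal (h x) + g x \<le> c}" "xs \<longlonglongrightarrow> l"
      have hc: "(\<lambda>n. c' - h (xs n)) \<longlonglongrightarrow> c' - h l"
        by (intro tendsto_intros continuous_on_tendsto_compose[OF assms(1) xs(2)]) auto
      have "eventually (\<lambda>n. g (xs n) \<le> ereal (c' - h (xs n))) sequentially"
      proof (rule always_eventually, rule allI)
        fix n
        have "ereal (h (xs n)) + g (xs n) \<le> ereal c'" using xs(1) real by auto
        then show "g (xs n) \<le> ereal (c' - h (xs n))"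
          by (cases "g (xs n)") (auto simp: algebra_simps)
      qed
      from lsc_seq_le[OF assms(2) xs(2) this hc] have "g l \<le> ereal (c' - h l)" .
      then show "l \<in> {x. ereal (h x) + g x \<le> c}" using real
        by (cases "g l") (auto simp: algebra_simps)
    qed
  qed
qed

locale cvxf =
  fixes g :: "'a::euclidean_space \<Rightarrow> ereal"
  assumes gprop: "proper_fun g" and lsc: "lsc_fun g" and cvx: "convex_efun g"
begin

lemma not_minf: "g x \<noteq> -\<infinity>" using gprop unfolding proper_fun_def by auto

lemma lower_bound: "\<exists>a c. c \<ge> 0 \<and> (\<forall>z. ereal (a - c * norm z) \<le> g z)"
proof -
  obtain x0 where x0: "g x0 < \<infinity>" using gprop unfolding proper_fun_def by auto
  then obtain r0 where r0: "g x0 = ereal r0" using not_minf[of x0] by (cases "g x0") auto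
  let ?S = "{x. g x \<le> ereal (r0 - 1)}"
  have "closed ?S" using lsc unfolding lsc_fun_def by blast
  hence "open (- ?S)" by auto
  moreover have "x0 \<in> - ?S" using r0 by auto
  ultimately obtain r where r: "r > 0" "ball x0 r \<subseteq> - ?S" by (meson open_contains_ball)
  have main: "ereal (r0 - 1 - 2 / r * norm (z - x0)) \<le> g z" for z
  proof (cases "g z")
    case PInf then show ?thesis by simp
  next
    case MInf then show ?thesis using not_minf by simp
  next
    case (real gz)
    show ?thesis
    proof (cases "norm (z - x0) < r")
      case True
      hence "z \<in> ball x0 r" by (simp add: dist_norm norm_minus_commute)
      hence "\<not> g z \<le> ereal (r0 - 1)" using r by auto
      hence "r0 - 1 < gz" using real by auto
      moreover have "0 \<le> 2 / r * norm (z - x0)" using r by simp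
      ultimately show ?thesis using real by simp
    next
      case False
      define t where "t = r / (2 * norm (z - x0))"
      have nz: "norm (z - x0) > 0" using False r by linarith
      have t: "0 < t" "t < 1" using False r nz by (auto simp: t_def field_simps)
      define w where "w = t *\<^sub>R z + (1 - t) *\<^sub>R x0"
      have "w - x0 = t *\<^sub>R (z - x0)" by (simp add: w_def algebra_simps)
      hence "norm (x0 - w) = t * norm (z - x0)" using t by (simp add: norm_minus_commute)
      also have "\<dots> = r / 2" using nz by (simp add: t_def)
      finally have "w \<in> ball x0 r" using r by (simp add: dist_norm)
      hence "\<not> g w \<le> ereal (r0 - 1)" using r by auto
      moreover have "g w \<le> ereal t * g z + ereal (1 - t) * g x0"
        using cvx t unfolding convex_efun_def w_def by blast
      ultimately have "ereal (r0 - 1) < ereal (t * gz + (1 - t) * r0)" using real r0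
      proof -
        have "g w \<le> ereal (t * gz + (1 - t) * r0)" using \<open>g w \<le> ereal t * g z + ereal (1 - t) * g x0\<close> real r0 by simp
        thus ?thesis using \<open>\<not> g w \<le> ereal (r0 - 1)\<close> by (meson less_le_trans not_le)
      qed
      hence "r0 - 1 < t * gz + (1 - t) * r0" by simp
      hence "t * (gz - r0) > -1" by (simp add: algebra_simps)
      hence "gz - r0 > -1 / t" using t by (simp add: field_simps)
      moreover have "1 / t = 2 / r * norm (z - x0)" using nz r by (simp add: t_def field_simps)
      moreover have "0 \<le> 2 / r * norm (z - x0)" using r by simp
      ultimately show ?thesis using real by simp
    qed
  qed
  show ?thesis
  proof (intro exI conjI allI)
    show "0 \<le> 2 / r" using r by simp
    fix z
    have "norm (z - x0) \<le> norm z + norm x0" by (rule norm_triangle_ineq4)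
    hence "2 / r * norm (z - x0) \<le> 2 / r * norm x0 + 2 / r * norm z"
      using r by (metis add.commute distrib_left divide_pos_pos mult_le_cancel_left_pos zero_less_numeral)
    hence "r0 - 1 - 2 / r * norm x0 - 2 / r * norm z \<le> r0 - 1 - 2 / r * norm (z - x0)"
      by linarith
    thus "ereal (r0 - 1 - 2 / r * norm x0 - 2 / r * norm z) \<le> g z"
      using main[of z] by (meson ereal_less_eq(3) order_trans)
  qed
qed

end

context cvxf begin

definition phi :: "'a \<Rightarrow> 'a \<Rightarrow> ereal" where
  "phi u z = ereal (1/2 * (norm (z - u))\<^sup>2) + g z"

lemma quad_aux: "1/2 * t\<^sup>2 - c * t \<ge> - (c\<^sup>2 / 2)" for t c :: real
proof -
  have "0 \<le> (t - c)\<^sup>2" by simp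
  thus ?thesis by (simp add: power2_eq_square algebra_simps)
qed

lemma phi_lsc: "lsc_fun (phi u)"
proof -
  have "continuous_on UNIV (\<lambda>z. 1/2 * (norm (z - u))\<^sup>2)" by (intro continuous_intros)
  from lsc_add_cont[OF this lsc] not_minf show ?thesis unfolding phi_def by blast
qed

lemma exists_min: "\<exists>z. \<forall>w. phi u z \<le> phi u w"
proof -
  obtain a c where ac: "c \<ge> 0" "\<forall>z. ereal (a - c * norm z) \<le> g z" using lower_bound by blast
  define B where "B = a - c\<^sup>2/2 - c * norm u"
  have lowz: "1/2 * (norm (z - u))\<^sup>2 + a - c * norm z \<ge> B + 1/2 * (norm (z - u))\<^sup>2 - c * norm (z - u) + c\<^sup>2/2" for z
  proof -
    have "norm z \<le> norm (z - u) + norm u" by (metis norm_triangle_sub add.commute)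
    hence "c * norm z \<le> c * norm (z - u) + c * norm u" using ac(1)
      by (metis distrib_left mult_left_mono)
    thus ?thesis unfolding B_def by simp
  qed
  have low: "ereal (B + 1/2 * (norm (z - u))\<^sup>2 - c * norm (z - u) + c\<^sup>2/2) \<le> phi u z" for z
  proof -
    have "ereal (B + 1/2 * (norm (z - u))\<^sup>2 - c * norm (z - u) + c\<^sup>2/2) \<le> ereal (1/2 * (norm (z - u))\<^sup>2) + ereal (a - c * norm z)"
      using lowz[of z] by simp
    also have "\<dots> \<le> phi u z" unfolding phi_def using ac(2) by (intro add_left_mono) auto
    finally show ?thesis .
  qed
  have lowB: "ereal B \<le> phi u z" for z
  proof -
    have "B \<le> B + 1/2 * (norm (z - u))\<^sup>2 - c * norm (z - u) + c\<^sup>2/2"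
      using quad_aux[where t="norm (z - u)" and c=c] by linarith
    hence "ereal B \<le> ereal (B + 1/2 * (norm (z - u))\<^sup>2 - c * norm (z - u) + c\<^sup>2/2)" by simp
    thus ?thesis using low[of z] by (rule order_trans)
  qed
  have bnd: "bounded {z. phi u z \<le> ereal K}" for K
  proof -
    define N where "N = max 1 (2 * (K - B) + c\<^sup>2)"
    have "{z. phi u z \<le> ereal K} \<subseteq> cball u (c + N)"
    proof
      fix z assume "z \<in> {z. phi u z \<le> ereal K}"
      hence "ereal (B + 1/2 * (norm (z - u))\<^sup>2 - c * norm (z - u) + c\<^sup>2/2) \<le> ereal K"
        using low[of z] by (metis mem_Collect_eq order_trans)
      hence "B + 1/2 * (norm (z - u))\<^sup>2 - c * norm (z - u) + c\<^sup>2/2 \<le> K" by simp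
      hence sq: "(norm (z - u) - c)\<^sup>2 \<le> 2 * (K - B)" by (simp add: power2_eq_square algebra_simps)
      have "norm (z - u) - c \<le> N"
      proof (cases "norm (z - u) - c \<le> 1")
        case True then show ?thesis unfolding N_def by linarith
      next
        case False
        hence "norm (z - u) - c \<le> (norm (z - u) - c)\<^sup>2"
          by (simp add: power2_eq_square)
        moreover have "0 \<le> c\<^sup>2" by simp
        ultimately show ?thesis using sq unfolding N_def
          by linarith
      qed
      thus "z \<in> cball u (c + N)" by (simp add: dist_norm norm_minus_commute)
    qed
    thus ?thesis using bounded_subset by blast
  qed
  obtain x0 where x0: "g x0 < \<infinity>" using gprop unfolding proper_fun_def by auto
  define m where "m = Inf (range (phi u))"
  have "m \<le> phi u x0" unfolding m_def by (rule Inf_lower) simp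
  moreover have "phi u x0 < \<infinity>" using x0 unfolding phi_def by simp
  ultimately have mlt: "m < \<infinity>" by (rule le_less_trans)
  have "ereal B \<le> m" unfolding m_def by (rule Inf_greatest) (use lowB in auto)
  with mlt obtain mr where mr: "m = ereal mr" by (cases m) auto
  define S where "S k = {z. phi u z \<le> ereal (mr + inverse (real (Suc k)))}" for k
  have "\<Inter>(range S) \<noteq> {}"
  proof (rule compact_nest)
    fix k
    have "closed (S k)" using phi_lsc unfolding lsc_fun_def S_def by blast
    thus "compact (S k)" using bnd unfolding S_def compact_eq_bounded_closed by blast
    have "m < ereal (mr + inverse (real (Suc k)))" using mr by simp
    then obtain z where "phi u z < ereal (mr + inverse (real (Suc k)))"
      unfolding m_def Inf_less_iff by auto
    thus "S k \<noteq> {}" unfolding S_def by (auto intro: less_imp_le)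
  next
    fix k l :: nat assume "k \<le> l"
    hence "inverse (real (Suc l)) \<le> inverse (real (Suc k))" by (simp add: field_simps)
    thus "S l \<subseteq> S k" unfolding S_def using order_trans by fastforce
  qed
  then obtain z where z: "\<And>k. phi u z \<le> ereal (mr + inverse (real (Suc k)))" unfolding S_def by blast
  have "phi u z \<le> m" unfolding mr
  proof (rule ereal_le_epsilon2)
    fix e :: real assume "0 < e"
    then obtain k where "inverse (real (Suc k)) < e" using reals_Archimedean by blast
    hence "ereal (mr + inverse (real (Suc k))) \<le> ereal mr + ereal e" by simp
    thus "phi u z \<le> ereal mr + ereal e" using z[of k] by (meson order_trans)
  qed
  moreover have "m \<le> phi u w" for w unfolding m_def by (rule Inf_lower) simp
  ultimately show ?thesis by (meson order_trans)
qed

end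

lemma norm_add_sq: "(norm (a + b))\<^sup>2 = (norm a)\<^sup>2 + 2 * (a \<bullet> b) + (norm (b::'a::real_inner))\<^sup>2"
  by (simp add: power2_norm_eq_inner inner_add_left inner_add_right inner_commute)

context cvxf begin

lemma csub_fin: "csub g z v \<Longrightarrow> \<exists>r. g z = ereal r"
  using not_minf[of z] unfolding csub_def by (cases "g z") auto

lemma min_csub:
  assumes m: "\<forall>w. phi u z \<le> phi u w"
  shows "csub g z (u - z)"
proof -
  obtain x0 where x0: "g x0 < \<infinity>" using gprop unfolding proper_fun_def by auto
  have "phi u z \<le> phi u x0" using m by blast
  moreover have "phi u x0 < \<infinity>" using x0 unfolding phi_def by simp
  ultimately have "phi u z < \<infinity>" by (rule le_less_trans)
  hence gz: "g z < \<infinity>" unfolding phi_def by simp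
  then obtain rz where rz: "g z = ereal rz" using not_minf[of z] by (cases "g z") auto
  have "g z + ereal ((u - z) \<bullet> (w - z)) \<le> g w" for w
  proof (cases "g w")
    case PInf then show ?thesis by simp
  next
    case MInf then show ?thesis using not_minf by simp
  next
    case (real rw)
    have key: "rz + (u - z) \<bullet> (w - z) \<le> rw + t / 2 * (norm (w - z))\<^sup>2" if t: "0 < t" "t < 1" for t
    proof -
      define wt where "wt = t *\<^sub>R w + (1 - t) *\<^sub>R z"
      have "g wt \<le> ereal t * g w + ereal (1 - t) * g z"
        using cvx t unfolding convex_efun_def wt_def by blast
      hence gwt: "g wt \<le> ereal (t * rw + (1 - t) * rz)" using real rz by simp
      have "phi u z \<le> phi u wt" using m by blast
      also have "\<dots> \<le> ereal (1/2 * (norm (wt - u))\<^sup>2) + ereal (t * rw + (1 - t) * rz)"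
        unfolding phi_def using gwt by (rule add_left_mono)
      finally have "1/2 * (norm (z - u))\<^sup>2 + rz \<le> 1/2 * (norm (wt - u))\<^sup>2 + (t * rw + (1 - t) * rz)"
        unfolding phi_def rz by simp
      moreover have eqw: "wt - u = (z - u) + t *\<^sub>R (w - z)" unfolding wt_def by (simp add: algebra_simps)
      have "(norm (wt - u))\<^sup>2 = (norm (z - u))\<^sup>2 + 2 * ((z - u) \<bullet> (t *\<^sub>R (w - z))) + (norm (t *\<^sub>R (w - z)))\<^sup>2"
        unfolding eqw by (rule norm_add_sq)
      hence "(norm (wt - u))\<^sup>2 = (norm (z - u))\<^sup>2 + 2 * t * ((z - u) \<bullet> (w - z)) + t\<^sup>2 * (norm (w - z))\<^sup>2"
        by (simp add: power_mult_distrib)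
      ultimately have "t * rz \<le> t * ((z - u) \<bullet> (w - z)) + t\<^sup>2 / 2 * (norm (w - z))\<^sup>2 + t * rw"
        by (simp add: algebra_simps)
      hence "t * (rz + (u - z) \<bullet> (w - z)) \<le> t * (rw + t / 2 * (norm (w - z))\<^sup>2)"
        by (simp add: algebra_simps power2_eq_square inner_diff_left inner_diff_right)
      thus ?thesis using t by simp
    qed
    have "rz + (u - z) \<bullet> (w - z) \<le> rw"
    proof (rule field_le_epsilon)
      fix e :: real assume e: "0 < e"
      define t where "t = min (1/2) (e / ((norm (w - z))\<^sup>2 + 1))"
      have pos: "0 < (norm (w - z))\<^sup>2 + 1" by (metis add_nonneg_pos zero_le_power2 zero_less_one)
      have "0 < e / ((norm (w - z))\<^sup>2 + 1)" using e pos by (rule divide_pos_pos)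
      hence t: "0 < t" "t < 1" unfolding t_def by auto
      define N where "N = (norm (w - z))\<^sup>2"
      have N0: "0 \<le> N" unfolding N_def by simp
      have "t \<le> e / (N + 1)" unfolding t_def N_def by simp
      hence "t * N \<le> e / (N + 1) * N" using N0 by (rule mult_right_mono)
      also have "\<dots> \<le> e / (N + 1) * (N + 1)" using e N0 by (intro mult_left_mono) auto
      also have "\<dots> = e" using N0 by simp
      finally have "t * (norm (w - z))\<^sup>2 \<le> e" unfolding N_def .
      hence "t / 2 * (norm (w - z))\<^sup>2 \<le> e" using e by simp
      thus "rz + (u - z) \<bullet> (w - z) \<le> rw + e" using key[OF t] by linarith
    qed
    then show ?thesis using real rz by simp
  qed
  thus ?thesis unfolding csub_def using gz by blast
qed

lemma csub_min:
  assumes c: "csub g z (u - z)"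
  shows "phi u z \<le> phi u w"
proof -
  obtain rz where rz: "g z = ereal rz" using csub_fin[OF c] by blast
  show ?thesis
  proof (cases "g w")
    case PInf then show ?thesis unfolding phi_def by simp
  next
    case MInf then show ?thesis using not_minf by simp
  next
    case (real rw)
    have "g z + ereal ((u - z) \<bullet> (w - z)) \<le> g w" using c unfolding csub_def by blast
    hence le: "rz + (u - z) \<bullet> (w - z) \<le> rw" using rz real by simp
    have "w - u = (z - u) + (w - z)" by simp
    hence "(norm (w - u))\<^sup>2 = (norm (z - u))\<^sup>2 + 2 * ((z - u) \<bullet> (w - z)) + (norm (w - z))\<^sup>2"
      using norm_add_sq[of "z - u" "w - z"] by simp
    moreover have "(z - u) \<bullet> (w - z) = - ((u - z) \<bullet> (w - z))"
      by (simp add: inner_diff_left)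
    moreover have "0 \<le> (norm (w - z))\<^sup>2" by simp
    ultimately have "1/2 * (norm (z - u))\<^sup>2 + rz \<le> 1/2 * (norm (w - u))\<^sup>2 + rw"
      using le by linarith
    thus ?thesis unfolding phi_def rz real by simp
  qed
qed

lemma csub_mono:
  assumes "csub g z1 v1" "csub g z2 v2"
  shows "0 \<le> (v1 - v2) \<bullet> (z1 - z2)"
proof -
  obtain r1 where r1: "g z1 = ereal r1" using csub_fin[OF assms(1)] by blast
  obtain r2 where r2: "g z2 = ereal r2" using csub_fin[OF assms(2)] by blast
  have "g z1 + ereal (v1 \<bullet> (z2 - z1)) \<le> g z2" using assms(1) unfolding csub_def by blast
  hence a: "r1 + v1 \<bullet> (z2 - z1) \<le> r2" using r1 r2 by simp
  have "g z2 + ereal (v2 \<bullet> (z1 - z2)) \<le> g z1" using assms(2) unfolding csub_def by blast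
  hence b: "r2 + v2 \<bullet> (z1 - z2) \<le> r1" using r1 r2 by simp
  from a b show ?thesis by (simp add: inner_diff_left inner_diff_right inner_commute algebra_simps)
qed

lemma prox_char: "prox g u = z \<longleftrightarrow> csub g z (u - z)"
proof -
  have eq: "prox g u = (THE z. \<forall>w. phi u z \<le> phi u w)" unfolding prox_def phi_def by (rule refl)
  have uniq: "z1 = z2" if "\<forall>w. phi u z1 \<le> phi u w" "\<forall>w. phi u z2 \<le> phi u w" for z1 z2
  proof -
    have "0 \<le> ((u - z1) - (u - z2)) \<bullet> (z1 - z2)" using csub_mono[OF min_csub[OF that(1)] min_csub[OF that(2)]] .
    hence "(z1 - z2) \<bullet> (z1 - z2) \<le> 0" by (simp add: inner_diff_left inner_diff_right inner_commute algebra_simps)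
    hence "\<not> 0 < (z1 - z2) \<bullet> (z1 - z2)" by linarith
    hence "z1 - z2 = 0" by (simp only: inner_gt_zero_iff not_not)
    thus ?thesis by simp
  qed
  obtain z0 where z0: "\<forall>w. phi u z0 \<le> phi u w" using exists_min by blast
  have p: "prox g u = z0" unfolding eq
    by (rule the_equality) (rule z0, rule uniq, assumption, rule z0)
  show ?thesis
  proof
    assume "prox g u = z" thus "csub g z (u - z)" using p min_csub[OF z0] by simp
  next
    assume "csub g z (u - z)"
    hence m: "\<forall>w. phi u z \<le> phi u w" using csub_min by blast
    show "prox g u = z" using p uniq[OF m z0] by simp
  qed
qed

lemma prox_csub: "csub g (prox g u) (u - prox g u)"
  using prox_char by blast

lemma prox_nonexp: "norm (prox g u - prox g u') \<le> norm (u - u')"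
proof -
  let ?p = "prox g u" and ?p' = "prox g u'"
  have "0 \<le> ((u - ?p) - (u' - ?p')) \<bullet> (?p - ?p')" using csub_mono[OF prox_csub prox_csub] .
  hence "(?p - ?p') \<bullet> (?p - ?p') \<le> (u - u') \<bullet> (?p - ?p')"
    by (simp add: inner_diff_left inner_diff_right inner_commute algebra_simps)
  also have "\<dots> \<le> norm (u - u') * norm (?p - ?p')" by (rule norm_cauchy_schwarz)
  finally have "norm (?p - ?p') * norm (?p - ?p') \<le> norm (u - u') * norm (?p - ?p')"
    by (simp add: power2_norm_eq_inner[symmetric] power2_eq_square)
  thus ?thesis by (cases "norm (?p - ?p') = 0") (auto simp: mult_le_cancel_right)
qed

end

context cvxf begin

lemma csub_limit:
  assumes xs: "xs \<longlonglongrightarrow> x" and us: "us \<longlonglongrightarrow> u"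
    and ev: "eventually (\<lambda>k. csub g (xs k) (us k)) sequentially"
  shows "csub g x u"
proof -
  have key: "g x \<le> ereal (rz - u \<bullet> (z - x))" if rz: "g z = ereal rz" for z rz
  proof (rule lsc_seq_le[OF lsc xs])
    show "eventually (\<lambda>k. g (xs k) \<le> ereal (rz - us k \<bullet> (z - xs k))) sequentially"
      using ev
    proof eventually_elim
      case (elim k)
      obtain a where a: "g (xs k) = ereal a" using csub_fin[OF elim] by blast
      have "g (xs k) + ereal (us k \<bullet> (z - xs k)) \<le> g z" using elim unfolding csub_def by blast
      thus ?case using a rz by simp
    qed
    show "(\<lambda>k. rz - us k \<bullet> (z - xs k)) \<longlonglongrightarrow> rz - u \<bullet> (z - x)"
      by (intro tendsto_intros us xs)
  qed
  obtain x0 where x0: "g x0 < \<infinity>" using gprop unfolding proper_fun_def by auto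
  then obtain r0 where "g x0 = ereal r0" using not_minf[of x0] by (cases "g x0") auto
  from key[OF this] have "g x < \<infinity>" using le_less_trans by fastforce
  moreover have "g x + ereal (u \<bullet> (z - x)) \<le> g z" for z
  proof (cases "g z")
    case PInf then show ?thesis by simp
  next
    case MInf then show ?thesis using not_minf by simp
  next
    case (real rz)
    from key[OF real] have "g x \<le> ereal (rz - u \<bullet> (z - x))" .
    thus ?thesis using real not_minf[of x] by (cases "g x") auto
  qed
  ultimately show ?thesis unfolding csub_def by blast
qed

end

locale compf = cvxf g for g :: "'a::euclidean_space \<Rightarrow> ereal" +
  fixes f :: "'a \<Rightarrow> ereal" and gf :: "'a \<Rightarrow> 'a" and Om :: "'a set"
  assumes Om_open: "open Om"
    and f_fin: "\<And>x. x \<in> Om \<Longrightarrow> \<bar>f x\<bar> \<noteq> \<infinity>"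
    and f_minf: "\<And>x. f x \<noteq> -\<infinity>"
    and f_der: "\<And>x. x \<in> Om \<Longrightarrow> ((\<lambda>z. real_of_ereal (f z)) has_derivative (\<lambda>h. gf x \<bullet> h)) (at x)"
begin

lemma f_eq: "x \<in> Om \<Longrightarrow> f x = ereal (real_of_ereal (f x))"
  using f_fin[of x] by (cases "f x") auto

lemma diff_approx:
  assumes x: "x \<in> Om" and e: "0 < e"
  shows "\<exists>d>0. ball x d \<subseteq> Om \<and> (\<forall>z. norm (z - x) < d \<longrightarrow>
      \<bar>real_of_ereal (f z) - real_of_ereal (f x) - gf x \<bullet> (z - x)\<bar> \<le> e * norm (z - x))"
proof -
  obtain d1 where d1: "d1 > 0" "\<forall>z. norm (z - x) < d1 \<longrightarrow>
      norm (real_of_ereal (f z) - real_of_ereal (f x) - gf x \<bullet> (z - x)) \<le> e * norm (z - x)"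
    using f_der[OF x] e unfolding has_derivative_at_alt by blast
  obtain d2 where d2: "d2 > 0" "ball x d2 \<subseteq> Om" using Om_open x open_contains_ball by blast
  show ?thesis
    by (rule exI[of _ "min d1 d2"]) (use d1 d2 in auto)
qed

lemma reg_sum:
  assumes y: "y \<in> Om" and c: "csub g y v"
  shows "gf y + v \<in> regular_subdiff (\<lambda>x. f x + g x) y"
proof -
  obtain ry where ry: "g y = ereal ry" using csub_fin[OF c] by blast
  define fy where "fy = real_of_ereal (f y)"
  have fy: "f y = ereal fy" using f_eq[OF y] fy_def by simp
  have "\<exists>\<delta>>0. \<forall>z\<in>ball y \<delta>. f z + g z \<ge> f y + g y + ereal ((gf y + v) \<bullet> (z - y) - \<epsilon> * norm (z - y))"
    if e: "\<epsilon> > 0" for \<epsilon>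
  proof -
    obtain d where d: "d > 0" "ball y d \<subseteq> Om" "\<forall>z. norm (z - y) < d \<longrightarrow>
      \<bar>real_of_ereal (f z) - fy - gf y \<bullet> (z - y)\<bar> \<le> \<epsilon> * norm (z - y)"
      using diff_approx[OF y e] fy_def by blast
    show ?thesis
    proof (intro exI conjI ballI)
      show "d > 0" by fact
      fix z assume z: "z \<in> ball y d"
      hence zO: "z \<in> Om" using d by auto
      have nz: "norm (z - y) < d" using z by (simp add: dist_norm norm_minus_commute)
      define fz where "fz = real_of_ereal (f z)"
      have fz: "f z = ereal fz" using f_eq[OF zO] fz_def by simp
      have fle: "fy + gf y \<bullet> (z - y) - \<epsilon> * norm (z - y) \<le> fz" using d(3) nz fz_def by force
      have gz: "g y + ereal (v \<bullet> (z - y)) \<le> g z" using c unfolding csub_def by blast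
      show "f y + g y + ereal ((gf y + v) \<bullet> (z - y) - \<epsilon> * norm (z - y)) \<le> f z + g z"
      proof (cases "g z")
        case PInf then show ?thesis using fz by simp
      next
        case MInf then show ?thesis using not_minf by simp
      next
        case (real rz)
        have "ry + v \<bullet> (z - y) \<le> rz" using gz ry real by simp
        hence "fy + ry + ((gf y + v) \<bullet> (z - y) - \<epsilon> * norm (z - y)) \<le> fz + rz"
          using fle by (simp add: inner_add_left)
        thus ?thesis using fy fz ry real by simp
      qed
    qed
  qed
  moreover have "\<bar>f y + g y\<bar> \<noteq> \<infinity>" using fy ry by simp
  ultimately show ?thesis unfolding regular_subdiff_def by blast
qed

end

context compf begin

lemma reg_csub:
  assumes y: "y \<in> Om" and v: "v \<in> regular_subdiff (\<lambda>x. f x + g x) y"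
  shows "csub g y (v - gf y)"
proof -
  define fy where "fy = real_of_ereal (f y)"
  have fy: "f y = ereal fy" using f_eq[OF y] fy_def by simp
  have Ffin: "\<bar>f y + g y\<bar> \<noteq> \<infinity>" using v unfolding regular_subdiff_def mem_Collect_eq by (elim conjE)
  then obtain ry where ry: "g y = ereal ry" using fy not_minf[of y] by (cases "g y") auto
  have reg: "\<exists>\<delta>>0. \<forall>z\<in>ball y \<delta>. f z + g z \<ge> f y + g y + ereal (v \<bullet> (z - y) - \<epsilon> * norm (z - y))"
    if "\<epsilon> > 0" for \<epsilon> using v that unfolding regular_subdiff_def mem_Collect_eq by (elim conjE) blast
  let ?u = "v - gf y"
  have "g y + ereal (?u \<bullet> (w - y)) \<le> g w" for w
  proof (cases "g w")
    case PInf then show ?thesis by simp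
  next
    case MInf then show ?thesis using not_minf by simp
  next
    case (real rw)
    have main: "ry + ?u \<bullet> (w - y) - 2 * \<epsilon> * norm (w - y) \<le> rw" if e: "\<epsilon> > 0" for \<epsilon>
    proof (cases "w = y")
      case True then show ?thesis using ry real by simp
    next
      case False
      hence nwy: "norm (w - y) > 0" by simp
      obtain d1 where d1: "d1 > 0" "\<forall>z\<in>ball y d1. f z + g z \<ge> f y + g y + ereal (v \<bullet> (z - y) - \<epsilon> * norm (z - y))"
        using reg[OF e] by blast
      obtain d2 where d2: "d2 > 0" "ball y d2 \<subseteq> Om" "\<forall>z. norm (z - y) < d2 \<longrightarrow>
        \<bar>real_of_ereal (f z) - fy - gf y \<bullet> (z - y)\<bar> \<le> \<epsilon> * norm (z - y)"
        using diff_approx[OF y e] fy_def by blast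
      define d where "d = min d1 d2"
      have d: "d > 0" using d1 d2 by (simp add: d_def)
      define t where "t = min (1/2) (d / (2 * norm (w - y)))"
      have t: "0 < t" "t < 1" using d nwy by (auto simp: t_def)
      have tn: "t * norm (w - y) < d"
      proof -
        have "t \<le> d / (2 * norm (w - y))" by (simp add: t_def)
        hence "t * norm (w - y) \<le> d / (2 * norm (w - y)) * norm (w - y)" using nwy by (intro mult_right_mono) auto
        also have "\<dots> = d / 2" using nwy by simp
        finally show ?thesis using d by simp
      qed
      define z where "z = t *\<^sub>R w + (1 - t) *\<^sub>R y"
      have zy: "z - y = t *\<^sub>R (w - y)" by (simp add: z_def algebra_simps)
      have nzy: "norm (z - y) = t * norm (w - y)" using t by (simp add: zy)
      have zb1: "z \<in> ball y d1" and zb2: "norm (z - y) < d2"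
        using nzy tn by (auto simp: d_def dist_norm norm_minus_commute)
      hence zO: "z \<in> Om" using d2 by (auto simp: dist_norm norm_minus_commute)
      define fz where "fz = real_of_ereal (f z)"
      have fz: "f z = ereal fz" using f_eq[OF zO] fz_def by simp
      have fle: "fz \<le> fy + gf y \<bullet> (z - y) + \<epsilon> * norm (z - y)" using d2(3) zb2 fz_def by force
      have gzc: "g z \<le> ereal t * g w + ereal (1 - t) * g y"
        using cvx t unfolding convex_efun_def z_def by blast
      hence gzc': "g z \<le> ereal (t * rw + (1 - t) * ry)" using real ry by simp
      then obtain gz where gz: "g z = ereal gz" using not_minf[of z] by (cases "g z") auto
      have "f y + g y + ereal (v \<bullet> (z - y) - \<epsilon> * norm (z - y)) \<le> f z + g z" using d1(2) zb1 by blast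
      hence A: "fy + ry + (v \<bullet> (z - y) - \<epsilon> * norm (z - y)) \<le> fz + gz" using fy ry fz gz by simp
      have B: "gz \<le> t * rw + (1 - t) * ry" using gzc' gz by simp
      from A fle B have "t * (ry + ?u \<bullet> (w - y) - 2 * \<epsilon> * norm (w - y)) \<le> t * rw"
        unfolding zy nzy[unfolded zy] by (simp add: inner_diff_left algebra_simps)
      thus ?thesis using t by simp
    qed
    have "ry + ?u \<bullet> (w - y) \<le> rw"
    proof (rule field_le_epsilon)
      fix e :: real assume e: "0 < e"
      define \<epsilon> where "\<epsilon> = e / (2 * (norm (w - y) + 1))"
      have pos: "0 < 2 * (norm (w - y) + 1)" by (simp add: add_nonneg_pos)
      have ep: "\<epsilon> > 0" unfolding \<epsilon>_def using e pos by (rule divide_pos_pos)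
      have "2 * \<epsilon> * norm (w - y) \<le> 2 * \<epsilon> * (norm (w - y) + 1)" using ep by simp
      also have "\<dots> = e" unfolding \<epsilon>_def using pos by (simp add: field_simps)
      finally show "ry + ?u \<bullet> (w - y) \<le> rw + e" using main[OF ep] by linarith
    qed
    then show ?thesis using ry real by simp
  qed
  moreover have "g y < \<infinity>" using ry by simp
  ultimately show ?thesis unfolding csub_def by blast
qed

lemma lim_csub:
  assumes x: "x \<in> Om" and cont: "isCont gf x" and w: "w \<in> limiting_subdiff (\<lambda>x. f x + g x) x"
  shows "csub g x (w - gf x)"
proof -
  obtain xs vs where xs: "xs \<longlonglongrightarrow> x" and vs: "vs \<longlonglongrightarrow> w"
    and reg: "\<forall>k. vs k \<in> regular_subdiff (\<lambda>x. f x + g x) (xs k)"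
    using w unfolding limiting_subdiff_def by blast
  have evO: "eventually (\<lambda>k. xs k \<in> Om) sequentially"
    using xs Om_open x by (rule topological_tendstoD)
  show ?thesis
  proof (rule csub_limit[OF xs])
    show "(\<lambda>k. vs k - gf (xs k)) \<longlonglongrightarrow> w - gf x"
      by (intro tendsto_intros vs isCont_tendsto_compose[OF cont xs])
    show "eventually (\<lambda>k. csub g (xs k) (vs k - gf (xs k))) sequentially"
      using evO by eventually_elim (use reg reg_csub in blast)
  qed
qed

end

lemma grad_lip:
  fixes A :: "real^'n^'m" and b :: "real^'m" and psi :: "real^'m \<Rightarrow> ereal"
    and grad_f :: "real^'n \<Rightarrow> real^'n" and Omega :: "(real^'n) set"
  assumes O_open: "open Omega" and xb: "xb \<in> Omega"
    and psi_C2: "\<exists>U. open U \<and> (\<lambda>x. A *v x - b) ` Omega \<subseteq> U \<and> C2_on psi U"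
    and grad_f: "\<forall>x\<in>Omega. ((\<lambda>z. real_of_ereal (psi (A *v z - b))) has_derivative (\<lambda>h. grad_f x \<bullet> h)) (at x)"
  shows "\<exists>\<rho>>0. \<exists>L\<ge>0. ball xb \<rho> \<subseteq> Omega \<and>
     (\<forall>x\<in>ball xb \<rho>. \<forall>y\<in>ball xb \<rho>. norm (grad_f x - grad_f y) \<le> L * norm (x - y))"
proof -
  obtain U where U: "open U" "(\<lambda>x. A *v x - b) ` Omega \<subseteq> U" "C2_on psi U" using psi_C2 by blast
  then obtain D :: "real^'m \<Rightarrow> ((real^'m) \<Rightarrow>\<^sub>L real)" and D2 :: "real^'m \<Rightarrow> ((real^'m) \<Rightarrow>\<^sub>L ((real^'m) \<Rightarrow>\<^sub>L real))"
    where D: "\<forall>y\<in>U. ((\<lambda>z. real_of_ereal (psi z)) has_derivative blinfun_apply (D y)) (at y)"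
      and D2: "\<forall>y\<in>U. (D has_derivative blinfun_apply (D2 y)) (at y)"
      and D2c: "continuous_on U D2"
    unfolding C2_on_def by blast
  define a0 where "a0 = A *v xb - b"
  have a0U: "a0 \<in> U" using U(2) xb a0_def by blast
  obtain r where r: "r > 0" "cball a0 r \<subseteq> U" using U(1) a0U open_contains_cball by blast
  have "compact (D2 ` cball a0 r)"
    by (rule compact_continuous_image) (use D2c r continuous_on_subset in auto)
  then obtain B where B: "B > 0" "\<forall>a\<in>cball a0 r. norm (D2 a) \<le> B"
  proof -
    have "bounded (D2 ` cball a0 r)" using \<open>compact (D2 ` cball a0 r)\<close> by (rule compact_imp_bounded)
    then obtain B where "B > 0" "\<forall>y\<in>D2 ` cball a0 r. norm y \<le> B" unfolding bounded_pos by blast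
    thus ?thesis using that by blast
  qed
  have Dlip: "norm (D a - D a') \<le> B * norm (a - a')" if aa: "a \<in> cball a0 r" "a' \<in> cball a0 r" for a a'
  proof -
    have cv: "convex (cball a0 r)" by (rule convex_cball)
    have dd: "(D has_derivative blinfun_apply (D2 x)) (at x within cball a0 r)" if "x \<in> cball a0 r" for x
    proof -
      have "x \<in> U" using r that by blast
      hence "(D has_derivative blinfun_apply (D2 x)) (at x)" using D2 by blast
      thus ?thesis by (rule has_derivative_at_withinI)
    qed
    have bb: "onorm (blinfun_apply (D2 x)) \<le> B" if "x \<in> cball a0 r" for x
    proof -
      have "onorm (blinfun_apply (D2 x)) = norm (D2 x)" by (simp only: norm_blinfun.rep_eq)
      thus ?thesis using B that by simp
    qed
    show ?thesis by (rule differentiable_bound[OF cv dd bb aa])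
  qed
  obtain K where K: "K > 0" "\<forall>h. norm (A *v h) \<le> norm h * K"
    using bounded_linear.pos_bounded[OF matrix_vector_mul_bounded_linear[of A]] by blast
  obtain \<rho>1 where \<rho>1: "\<rho>1 > 0" "ball xb \<rho>1 \<subseteq> Omega" using O_open xb open_contains_ball by blast
  define \<rho> where "\<rho> = min \<rho>1 (r / K)"
  have \<rho>: "\<rho> > 0" using \<rho>1 r K by (simp add: \<rho>_def)
  have ballO: "ball xb \<rho> \<subseteq> Omega" using \<rho>1 by (auto simp: \<rho>_def)
  have inc: "A *v x - b \<in> cball a0 r" if "x \<in> ball xb \<rho>" for x
  proof -
    have "A *v x - b - a0 = A *v (x - xb)" by (simp add: a0_def matrix_vector_mult_diff_distrib)
    hence "norm (a0 - (A *v x - b)) \<le> norm (x - xb) * K" using K by (metis norm_minus_commute)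
    also have "\<dots> \<le> \<rho> * K" using that K by (intro mult_right_mono) (auto simp: dist_norm norm_minus_commute)
    also have "\<dots> \<le> r / K * K" using K by (intro mult_right_mono) (auto simp: \<rho>_def)
    also have "\<dots> = r" using K by simp
    finally show ?thesis by (simp add: dist_norm)
  qed
  have rep: "grad_f x \<bullet> h = blinfun_apply (D (A *v x - b)) (A *v h)" if "x \<in> ball xb \<rho>" for x h
  proof -
    have xO: "x \<in> Omega" using that ballO by blast
    have aff: "((\<lambda>z. A *v z - b) has_derivative (\<lambda>h. A *v h)) (at x)"
      by (auto intro!: derivative_eq_intros bounded_linear.has_derivative[OF matrix_vector_mul_bounded_linear])
    have "A *v x - b \<in> U" using U(2) xO by blast
    hence "(((\<lambda>z. real_of_ereal (psi z)) \<circ> (\<lambda>z. A *v z - b)) has_derivative (blinfun_apply (D (A *v x - b)) \<circ> (\<lambda>h. A *v h))) (at x)"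
      using D by (intro diff_chain_at[OF aff]) auto
    hence "((\<lambda>z. real_of_ereal (psi (A *v z - b))) has_derivative (\<lambda>h. blinfun_apply (D (A *v x - b)) (A *v h))) (at x)"
      by (simp add: o_def)
    from has_derivative_unique[OF grad_f[rule_format, OF xO] this]
    have "(\<lambda>h. grad_f x \<bullet> h) = (\<lambda>h. blinfun_apply (D (A *v x - b)) (A *v h))" .
    thus ?thesis by (rule fun_cong)
  qed
  define L where "L = B * K * K"
  show ?thesis
  proof (intro exI conjI ballI)
    show "\<rho> > 0" by fact
    show L0: "L \<ge> 0" using B K by (simp add: L_def)
    show "ball xb \<rho> \<subseteq> Omega" by fact
    fix x y assume x: "x \<in> ball xb \<rho>" and y: "y \<in> ball xb \<rho>"
    define d where "d = grad_f x - grad_f y"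
    have "d \<bullet> d = grad_f x \<bullet> d - grad_f y \<bullet> d" by (simp add: d_def inner_diff_left)
    also have "\<dots> = blinfun_apply (D (A *v x - b) - D (A *v y - b)) (A *v d)"
      using rep[OF x] rep[OF y] by (simp add: blinfun.diff_left)
    also have "\<dots> \<le> norm (blinfun_apply (D (A *v x - b) - D (A *v y - b)) (A *v d))" by simp
    also have "\<dots> \<le> norm (D (A *v x - b) - D (A *v y - b)) * norm (A *v d)" by (rule norm_blinfun)
    also have "\<dots> \<le> (B * norm ((A *v x - b) - (A *v y - b))) * (norm d * K)"
      using Dlip[OF inc[OF x] inc[OF y]] K B by (intro mult_mono) auto
    also have "norm ((A *v x - b) - (A *v y - b)) = norm (A *v (x - y))"
      by (simp add: matrix_vector_mult_diff_distrib)
    also have "B * norm (A *v (x - y)) * (norm d * K) \<le> B * (norm (x - y) * K) * (norm d * K)"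
      using K B by (intro mult_right_mono mult_left_mono) auto
    finally have "norm d * norm d \<le> (L * norm (x - y)) * norm d"
      by (simp add: L_def power2_norm_eq_inner[symmetric] power2_eq_square algebra_simps)
    thus "norm (grad_f x - grad_f y) \<le> L * norm (x - y)"
      unfolding d_def[symmetric] using L0 by (cases "norm d = 0") (auto simp: mult_le_cancel_right)
  qed
qed

lemma infdist_approx:
  assumes "A \<noteq> {}" "e > 0"
  shows "\<exists>a\<in>A. dist x a < infdist x A + e"
proof -
  have bdd: "bdd_below ((\<lambda>a. dist x a) ` A)" by (rule bdd_belowI[of _ 0]) auto
  have lt: "(INF a\<in>A. dist x a) < infdist x A + e" using assms by (simp add: infdist_notempty)
  show ?thesis using iffD1[OF cINF_less_iff[OF assms(1) bdd] lt] .
qed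

lemma infdist_local:
  assumes ne: "ZF \<noteq> {}" and T: "infdist y ZF \<le> T" and near: "dist y xb + T < \<rho>"
    and loc: "\<forall>z\<in>ZF. dist z xb < \<rho> \<longrightarrow> z \<in> ZR"
  shows "infdist y ZR \<le> T"
proof (rule field_le_epsilon)
  fix e :: real assume e: "0 < e"
  define e' where "e' = min e ((\<rho> - dist y xb - T) / 2)"
  have e3: "e' \<le> (\<rho> - dist y xb - T) / 2" unfolding e'_def by (rule min.cobounded2)
  have e1: "0 < e'" using e near by (simp add: e'_def)
  have e2: "e' \<le> e" unfolding e'_def by (rule min.cobounded1)
  have "(\<rho> - dist y xb - T) / 2 < \<rho> - dist y xb - T" using near by simp
  hence e': "0 < e'" "e' \<le> e" "dist y xb + T + e' < \<rho>" using e1 e2 e3 by linarith+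
  obtain z where z: "z \<in> ZF" "dist y z < infdist y ZF + e'" using infdist_approx[OF ne e'(1)] by blast
  have "dist z xb \<le> dist y z + dist y xb" using dist_triangle[of z xb y] by (simp add: dist_commute)
  hence "dist z xb < \<rho>" using z T e' by linarith
  hence "z \<in> ZR" using loc z by blast
  hence "infdist y ZR \<le> dist y z" by (rule infdist_le)
  thus "infdist y ZR \<le> T + e" using z T e' by linarith
qed

lemma inf_powr:
  fixes S :: "'a::real_normed_vector set"
  assumes ne: "S \<noteq> {}" and k: "\<kappa> > 0" and q: "q > 0" and all: "\<forall>w\<in>S. a \<le> \<kappa> * norm w powr q"
  shows "a \<le> \<kappa> * (infdist 0 S) powr q"
proof (rule ccontr)
  assume "\<not> ?thesis"
  hence lt: "\<kappa> * (infdist 0 S) powr q < a" by simp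
  define d where "d = infdist 0 S"
  have d0: "0 \<le> d" unfolding d_def by (rule infdist_nonneg)
  define c where "c = (a / \<kappa>) powr (1 / q)"
  have "d powr q < a / \<kappa>" using lt k unfolding d_def by (simp add: field_simps)
  hence "(d powr q) powr (1/q) < (a / \<kappa>) powr (1/q)" using q by (intro powr_less_mono2) auto
  hence dc: "d < c" unfolding c_def powr_powr using q d0 by (simp add: powr_one)
  obtain w where w: "w \<in> S" "dist 0 w < d + (c - d)" using infdist_approx[OF ne, of "c - d" 0] dc unfolding d_def by auto
  hence "norm w < c" by simp
  hence "norm w powr q < c powr q" using q by (intro powr_less_mono2) auto
  also have "c powr q = a / \<kappa>" unfolding c_def powr_powr
  proof -
    have "0 \<le> \<kappa> * (infdist 0 S) powr q" using k by simp
    hence "0 < a" using lt by linarith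
    thus "(a / \<kappa>) powr (1 / q * q) = a / \<kappa>" using q k by (simp add: powr_one)
  qed
  finally have "\<kappa> * norm w powr q < a" using k by (simp add: field_simps)
  thus False using all w by fastforce
qed

lemma reg_lim: "v \<in> regular_subdiff h x \<Longrightarrow> v \<in> limiting_subdiff h x"
  unfolding limiting_subdiff_def
  by (rule CollectI, rule exI[of _ "\<lambda>k. x"], rule exI[of _ "\<lambda>k. v"]) auto

theorem lemma2p3:
  fixes A :: "real^'n^'m" and b :: "real^'m"
    and psi :: "real^'m \<Rightarrow> ereal" and g :: "real^'n \<Rightarrow> ereal"
    and grad_f :: "real^'n \<Rightarrow> real^'n"
    and Omega :: "(real^'n) set"
    and xb :: "real^'n" and q :: real
  defines "f \<equiv> (\<lambda>x. psi (A *v x - b))"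
  defines "F \<equiv> (\<lambda>x. f x + g x)"
  defines "R \<equiv> (\<lambda>x. x - prox g (x - grad_f x))"
  assumes psi_proper: "proper_fun psi" and psi_lsc: "lsc_fun psi"
    and g_proper: "proper_fun g" and g_lsc: "lsc_fun g"
    and O_open: "open Omega" and O_dom: "edom g \<subseteq> Omega"
    and psi_C2: "\<exists>U. open U \<and> (\<lambda>x. A *v x - b) ` Omega \<subseteq> U \<and> C2_on psi U"
    and grad_f: "\<forall>x\<in>Omega. ((\<lambda>z. real_of_ereal (f z)) has_derivative (\<lambda>h. grad_f x \<bullet> h)) (at x)"
    and g_convex: "convex_efun g" and g_cont: "continuous_on (edom g) g"
    and F_bdd_below: "\<exists>c::real. \<forall>x. ereal c \<le> F x"
    and F_level_bdd: "\<forall>\<alpha>::real. bounded {x. F x \<le> ereal \<alpha>}"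
    and xb_crit: "xb \<in> edom g" "0 \<in> limiting_subdiff F xb"
    and q_pos: "q > 0"
  shows "(q_subregular (limiting_subdiff F) xb 0 q \<longrightarrow> q_subregular (\<lambda>x. {R x}) xb 0 (min q 1))
       \<and> (q_subregular (\<lambda>x. {R x}) xb 0 q \<longrightarrow> q_subregular (limiting_subdiff F) xb 0 q)"
proof -
  interpret cvxf g using g_proper g_lsc g_convex by unfold_locales
  have xbO: "xb \<in> Omega" using xb_crit(1) O_dom by blast
  obtain U where U: "open U" "(\<lambda>x. A *v x - b) ` Omega \<subseteq> U" "C2_on psi U" using psi_C2 by blast
  have f_fin: "\<bar>f x\<bar> \<noteq> \<infinity>" if "x \<in> Omega" for x
  proof -
    have xU: "A *v x - b \<in> U" using U(2) that by blast
    have "\<forall>y\<in>U. \<bar>psi y\<bar> \<noteq> \<infinity>" using U(3) unfolding C2_on_def by (elim conjE)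
    thus ?thesis using xU unfolding f_def by simp
  qed
  have f_minf: "f x \<noteq> -\<infinity>" for x using psi_proper unfolding proper_fun_def f_def by blast
  interpret compf g f grad_f Omega
    using O_open f_fin f_minf grad_f by unfold_locales auto
  obtain \<rho>0 L where \<rho>0: "\<rho>0 > 0" and L0: "L \<ge> 0" and ballO: "ball xb \<rho>0 \<subseteq> Omega"
    and lip: "\<forall>x\<in>ball xb \<rho>0. \<forall>y\<in>ball xb \<rho>0. norm (grad_f x - grad_f y) \<le> L * norm (x - y)"
    using grad_lip[OF O_open xbO psi_C2] grad_f unfolding f_def by blast
  have "L-lipschitz_on (ball xb \<rho>0) grad_f"
    using lip L0 by (intro lipschitz_onI) (auto simp: dist_norm)
  hence "continuous_on (ball xb \<rho>0) grad_f" by (rule lipschitz_on_continuous_on)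
  hence cont: "isCont grad_f x" if "x \<in> ball xb \<rho>0" for x
    using continuous_on_eq_continuous_at[OF open_ball] that by blast
  let ?ZF = "{z. 0 \<in> limiting_subdiff F z}"
  let ?ZR = "{z. (0::real^'n) \<in> {R z}}"
  have ZR_ZF: "0 \<in> limiting_subdiff F z" if "R z = 0" for z
  proof -
    have "prox g (z - grad_f z) = z" using that unfolding R_def by simp
    hence c: "csub g z ((z - grad_f z) - z)" using prox_char by blast
    hence "z \<in> Omega" using O_dom unfolding csub_def edom_def by blast
    from reg_sum[OF this c] have "0 \<in> regular_subdiff (\<lambda>x. f x + g x) z" by simp
    thus ?thesis unfolding F_def by (rule reg_lim)
  qed
  have lim_c: "csub g x (w - grad_f x)" if "x \<in> ball xb \<rho>0" "w \<in> limiting_subdiff F x" for x w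
    using lim_csub[OF _ cont[OF that(1)]] that ballO unfolding F_def by blast
  have ZF_ZR: "R z = 0" if "z \<in> ball xb \<rho>0" "0 \<in> limiting_subdiff F z" for z
  proof -
    have "csub g z ((z - grad_f z) - z)" using lim_c[OF that] by simp
    hence "prox g (z - grad_f z) = z" using prox_char by blast
    thus ?thesis unfolding R_def by simp
  qed
  have Rxb: "R xb = 0" using ZF_ZR[OF _ xb_crit(2)] \<rho>0 by simp
  have lim_prox: "prox g (x - grad_f x + w) = x" if "x \<in> ball xb \<rho>0" "w \<in> limiting_subdiff F x" for x w
  proof -
    have "csub g x ((x - grad_f x + w) - x)" using lim_c[OF that] by simp
    thus ?thesis using prox_char by blast
  qed
  have ZRne: "?ZR \<noteq> {}" using Rxb by auto
  have ZRsub: "?ZR \<subseteq> ?ZF" using ZR_ZF by auto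
  have ZFne: "?ZF \<noteq> {}" using xb_crit(2) by auto
  show ?thesis
  proof (intro conjI impI)
    assume "q_subregular (\<lambda>x. {R x}) xb 0 q"
    then obtain \<kappa> \<delta> where k: "\<kappa> > 0" and d: "\<delta> > 0"
      and H: "\<forall>x\<in>cball xb \<delta>. {R x} \<noteq> {} \<longrightarrow> infdist x ?ZR \<le> \<kappa> * (infdist 0 {R x}) powr q"
      unfolding q_subregular_def by blast
    define \<delta>' where "\<delta>' = min \<delta> (\<rho>0 / 2)"
    have d': "\<delta>' > 0" using d \<rho>0 by (simp add: \<delta>'_def)
    have main: "infdist x ?ZF \<le> \<kappa> * (infdist 0 (limiting_subdiff F x)) powr q"
      if x: "x \<in> cball xb \<delta>'" and ne: "limiting_subdiff F x \<noteq> {}" for x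
    proof -
      have xb1: "x \<in> ball xb \<rho>0" using x \<rho>0 by (auto simp: \<delta>'_def)
      have xb2: "x \<in> cball xb \<delta>" using x by (auto simp: \<delta>'_def)
      have hR: "infdist x ?ZR \<le> \<kappa> * (norm (R x)) powr q" using H xb2 by simp
      have mono: "infdist x ?ZF \<le> infdist x ?ZR" by (rule infdist_mono[OF ZRsub ZRne])
      have "\<forall>w\<in>limiting_subdiff F x. infdist x ?ZF \<le> \<kappa> * norm w powr q"
      proof
        fix w assume w: "w \<in> limiting_subdiff F x"
        have "R x = prox g (x - grad_f x + w) - prox g (x - grad_f x)"
          using lim_prox[OF xb1 w] unfolding R_def by simp
        hence "norm (R x) \<le> norm ((x - grad_f x + w) - (x - grad_f x))"
          by (simp only: prox_nonexp)
        hence "norm (R x) \<le> norm w" by simp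
        hence "norm (R x) powr q \<le> norm w powr q" using q_pos by (intro powr_mono2) auto
        thus "infdist x ?ZF \<le> \<kappa> * norm w powr q" using hR mono k
        proof -
          have "\<kappa> * norm (R x) powr q \<le> \<kappa> * norm w powr q" using \<open>norm (R x) powr q \<le> norm w powr q\<close> k by simp
          thus ?thesis using hR mono by linarith
        qed
      qed
      thus "infdist x ?ZF \<le> \<kappa> * (infdist 0 (limiting_subdiff F x)) powr q"
        by (rule inf_powr[OF ne k q_pos])
    qed
    show "q_subregular (limiting_subdiff F) xb 0 q"
      unfolding q_subregular_def using xb_crit(2) k d' main by blast
  next
    assume "q_subregular (limiting_subdiff F) xb 0 q"
    then obtain \<kappa> \<delta> where k: "\<kappa> > 0" and d: "\<delta> > 0"
      and H: "\<forall>x\<in>cball xb \<delta>. limiting_subdiff F x \<noteq> {} \<longrightarrow>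
          infdist x ?ZF \<le> \<kappa> * (infdist 0 (limiting_subdiff F x)) powr q"
      unfolding q_subregular_def by blast
    define C where "C = 3 + L"
    define \<rho> where "\<rho> = min \<rho>0 \<delta>"
    define M where "M = \<kappa> * (1 + L) powr q"
    have M0: "0 \<le> M" using k by (simp add: M_def)
    define s where "s = \<rho>0 / (2 * (M + 1))"
    have s0: "s > 0" using \<rho>0 M0 by (simp add: s_def)
    define \<eta> where "\<eta> = min (min (\<rho> / (3 * C)) (1 / (2 + L))) ((s powr (1 / q)) / (2 + L))"
    have C3: "C \<ge> 3" using L0 by (simp add: C_def)
    have \<rho>pos: "\<rho> > 0" using \<rho>0 d by (simp add: \<rho>_def)
    have \<eta>0: "\<eta> > 0" using \<rho>pos C3 L0 s0 by (simp add: \<eta>_def)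
    have \<eta>1: "C * \<eta> \<le> \<rho> / 3"
    proof -
      have "\<eta> \<le> \<rho> / (3 * C)" by (simp add: \<eta>_def)
      hence "C * \<eta> \<le> C * (\<rho> / (3 * C))" using C3 by (intro mult_left_mono) auto
      also have "\<dots> = \<rho> / 3" using C3 by simp
      finally show ?thesis .
    qed
    have \<eta>2: "(2 + L) * \<eta> \<le> 1"
    proof -
      have "\<eta> \<le> 1 / (2 + L)" by (simp add: \<eta>_def)
      hence "(2 + L) * \<eta> \<le> (2 + L) * (1 / (2 + L))" using L0 by (intro mult_left_mono) auto
      thus ?thesis using L0 by simp
    qed
    have \<eta>3: "((2 + L) * \<eta>) powr q \<le> s"
    proof -
      have "\<eta> \<le> (s powr (1 / q)) / (2 + L)" by (simp add: \<eta>_def)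
      hence "(2 + L) * \<eta> \<le> (2 + L) * ((s powr (1 / q)) / (2 + L))" using L0 by (intro mult_left_mono) auto
      also have "\<dots> = s powr (1 / q)" using L0 by simp
      finally have "((2 + L) * \<eta>) powr q \<le> (s powr (1 / q)) powr q"
        using q_pos \<eta>0 L0 by (intro powr_mono2) auto
      also have "\<dots> = s" using s0 q_pos by (simp add: powr_powr powr_one)
      finally show ?thesis .
    qed
    have Ms: "M * s < \<rho>0 / 2"
    proof -
      have "M * s = \<rho>0 / 2 * (M / (M + 1))" using M0 by (simp add: s_def field_simps)
      also have "\<dots> < \<rho>0 / 2 * 1" using M0 \<rho>0 by (intro mult_strict_left_mono) auto
      finally show ?thesis by simp
    qed
    have main: "infdist x ?ZR \<le> (M + 1) * (infdist 0 {R x}) powr (min q 1)"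
      if x: "x \<in> cball xb \<eta>" for x
    proof -
      define nx where "nx = norm (x - xb)"
      have nx: "nx \<le> \<eta>" "0 \<le> nx" using x by (auto simp: nx_def dist_norm norm_minus_commute)
      have \<eta>\<rho>: "\<eta> < \<rho>0"
      proof -
        have "3 * \<eta> \<le> C * \<eta>" using C3 \<eta>0 by (intro mult_right_mono) auto
        moreover have "\<rho> \<le> \<rho>0" by (simp add: \<rho>_def)
        ultimately show ?thesis using \<eta>1 \<eta>0 by linarith
      qed
      have xb1: "x \<in> ball xb \<rho>0" using nx \<eta>\<rho> by (simp add: nx_def dist_norm norm_minus_commute)
      have xbb: "xb \<in> ball xb \<rho>0" using \<rho>0 by simp
      have hRx: "norm (R x) \<le> (2 + L) * nx"
      proof -
        have "R x = R x - R xb" using Rxb by simp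
        also have "\<dots> = (x - xb) - (prox g (x - grad_f x) - prox g (xb - grad_f xb))"
          unfolding R_def by simp
        finally have eqR: "R x = (x - xb) - (prox g (x - grad_f x) - prox g (xb - grad_f xb))" .
        have "norm (R x) \<le> norm (x - xb) + norm (prox g (x - grad_f x) - prox g (xb - grad_f xb))"
          unfolding eqR by (rule norm_triangle_ineq4)
        also have "\<dots> \<le> nx + norm ((x - grad_f x) - (xb - grad_f xb))"
          using prox_nonexp[of "x - grad_f x" "xb - grad_f xb"] nx_def by linarith
        also have "norm ((x - grad_f x) - (xb - grad_f xb)) \<le> norm (x - xb) + norm (grad_f x - grad_f xb)"
        proof -
          have "(x - grad_f x) - (xb - grad_f xb) = (x - xb) - (grad_f x - grad_f xb)" by (simp add: algebra_simps)
          thus ?thesis by (simp only: norm_triangle_ineq4)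
        qed
        also have "norm (grad_f x - grad_f xb) \<le> L * nx" using lip xb1 xbb nx_def by blast
        finally show ?thesis unfolding nx_def by (simp add: algebra_simps)
      qed
      define y where "y = prox g (x - grad_f x)"
      have hy: "x - y = R x" unfolding y_def R_def by simp
      have ny: "norm (y - xb) \<le> C * \<eta>"
      proof -
        have "y - xb = (x - xb) - R x" using hy by (simp add: algebra_simps)
        hence "norm (y - xb) \<le> nx + norm (R x)" unfolding nx_def by (simp only: norm_triangle_ineq4)
        also have "\<dots> \<le> nx + (2 + L) * nx" using hRx by simp
        also have "\<dots> = C * nx" by (simp add: C_def algebra_simps)
        also have "\<dots> \<le> C * \<eta>" using nx C3 by (intro mult_left_mono) auto
        finally show ?thesis .
      qed
      have ny2: "norm (y - xb) \<le> \<rho> / 3" using ny \<eta>1 by linarith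
      have yb1: "y \<in> ball xb \<rho>0" using ny2 \<rho>pos by (simp add: dist_norm norm_minus_commute \<rho>_def)
      have yb2: "y \<in> cball xb \<delta>" using ny2 \<rho>pos by (simp add: dist_norm norm_minus_commute \<rho>_def)
      have cy: "csub g y ((x - grad_f x) - y)" unfolding y_def by (rule prox_csub)
      hence yO: "y \<in> Omega" using O_dom unfolding csub_def edom_def by blast
      define v where "v = grad_f y + ((x - grad_f x) - y)"
      have vF: "v \<in> limiting_subdiff F y" unfolding v_def F_def by (rule reg_lim, rule reg_sum[OF yO cy])
      have nv: "norm v \<le> (1 + L) * norm (R x)"
      proof -
        have "v = R x + (grad_f y - grad_f x)" using hy unfolding v_def by (simp add: algebra_simps)
        hence "norm v \<le> norm (R x) + norm (grad_f y - grad_f x)" by (simp only: norm_triangle_ineq)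
        also have "norm (grad_f y - grad_f x) \<le> L * norm (y - x)" using lip yb1 xb1 by blast
        also have "norm (y - x) = norm (R x)" using hy norm_minus_commute[of y x] by simp
        finally show ?thesis by (simp add: algebra_simps)
      qed
      define r where "r = norm (R x)"
      have r0: "0 \<le> r" by (simp add: r_def)
      have r1: "r \<le> (2 + L) * \<eta>"
      proof -
        have "(2 + L) * nx \<le> (2 + L) * \<eta>" using nx L0 by (intro mult_left_mono) auto
        thus ?thesis using hRx unfolding r_def by linarith
      qed
      have rle1: "r \<le> 1" using r1 \<eta>2 by linarith
      have "infdist y ?ZF \<le> \<kappa> * (infdist 0 (limiting_subdiff F y)) powr q"
        using H yb2 vF by blast
      also have "\<dots> \<le> \<kappa> * (norm v) powr q"
      proof -
        have "infdist 0 (limiting_subdiff F y) \<le> norm v" using infdist_le[OF vF, of 0] by simp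
        hence "(infdist 0 (limiting_subdiff F y)) powr q \<le> (norm v) powr q"
          using q_pos by (intro powr_mono2) (auto intro: infdist_nonneg)
        thus ?thesis using k by simp
      qed
      also have "\<dots> \<le> \<kappa> * ((1 + L) * r) powr q"
        using nv q_pos k unfolding r_def by (intro mult_left_mono powr_mono2) auto
      also have "\<dots> = M * r powr q" unfolding M_def using L0 r0 by (simp add: powr_mult)
      finally have T: "infdist y ?ZF \<le> M * r powr q" .
      have "r powr q \<le> ((2 + L) * \<eta>) powr q" using r1 r0 q_pos by (intro powr_mono2) auto
      hence "r powr q \<le> s" using \<eta>3 by linarith
      hence "M * r powr q \<le> M * s" using M0 by (rule mult_left_mono)
      hence near: "dist y xb + M * r powr q < \<rho>0"
      proof -
        have "\<rho> \<le> \<rho>0" by (simp add: \<rho>_def)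
        moreover have "dist y xb = norm (y - xb)" by (simp add: dist_norm)
        ultimately show ?thesis using Ms ny2 \<open>M * r powr q \<le> M * s\<close> \<rho>0 by linarith
      qed
      have loc: "\<forall>z\<in>?ZF. dist z xb < \<rho>0 \<longrightarrow> z \<in> ?ZR"
        using ZF_ZR by (auto simp: dist_commute)
      have TR: "infdist y ?ZR \<le> M * r powr q" by (rule infdist_local[OF ZFne T near loc])
      have "infdist x ?ZR \<le> infdist y ?ZR + dist x y" by (rule infdist_triangle)
      also have "dist x y = r" unfolding r_def using hy by (simp add: dist_norm)
      finally have A: "infdist x ?ZR \<le> M * r powr q + r" using TR by linarith
      have p1: "r powr q \<le> r powr (min q 1)" using r0 rle1 by (intro powr_mono') auto
      have p2: "r \<le> r powr (min q 1)"
      proof -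
        have "r powr 1 \<le> r powr (min q 1)" using r0 rle1 by (intro powr_mono') auto
        thus ?thesis using r0 by (simp add: powr_one)
      qed
      have "infdist x ?ZR \<le> M * r powr (min q 1) + r powr (min q 1)"
      proof -
        have "M * r powr q \<le> M * r powr (min q 1)" using p1 M0 by (rule mult_left_mono)
        thus ?thesis using A p2 by linarith
      qed
      thus "infdist x ?ZR \<le> (M + 1) * (infdist 0 {R x}) powr (min q 1)"
        unfolding r_def by (simp add: algebra_simps)
    qed
    have M1: "M + 1 > 0" using M0 by simp
    show "q_subregular (\<lambda>x. {R x}) xb 0 (min q 1)"
      unfolding q_subregular_def
    proof (intro conjI)
      show "0 \<in> {R xb}" using Rxb by simp
      have A: "\<forall>x\<in>cball xb \<eta>. {R x} \<noteq> {} \<longrightarrow> infdist x {z. 0 \<in> {R z}} \<le> (M + 1) * infdist 0 {R x} powr min q 1"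
        using main by blast
      show "\<exists>\<kappa>>0. \<exists>\<delta>>0. \<forall>x\<in>cball xb \<delta>. {R x} \<noteq> {} \<longrightarrow> infdist x {z. 0 \<in> {R z}} \<le> \<kappa> * infdist 0 {R x} powr min q 1"
        apply (rule exI[of _ "M + 1"])
        apply (rule conjI[OF M1])
        apply (rule exI[of _ \<eta>])
        apply (rule conjI[OF \<eta>0])
        apply (rule A)
        done
    qed
  qed
qed

end
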